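(* Let $P\ge 2$. Let $\beta_1,\dots,\beta_{P-1}$ be real parameters varying in an open set, put $\beta_P:=1-\sum_{i=1}^{P-1}\beta_i$, and let $\omega_i=\omega_i(\beta_1,\dots,\beta_{P-1})$, $i=1,\dots,P$, be differentiable functions. Define $\Gamma(\kappa)=\prod_{i=1}^{P}|1-\omega_i\kappa|^{\beta_i}$. Let $\kappa_1,\dots,\kappa_{P-1}$ be differentiable functions of the $\beta$'s which are critical points of $\Gamma$, i.e. $\sum_{i=1}^P\frac{\beta_i\omega_i}{1-\kappa\,\omega_i}=0$ at $\kappa=\kappa_j$, and let $\kappa_P:=\kappa_M=2$ (a constant). Assume that $\frac{\partial}{\partial\beta_q}\Gamma(\kappa_i)=0$ for all $i=1,\dots,P$ and $q=1,\dots,P-1$ (total derivatives with respect to $\beta_q$). Assume moreover that $\omega_1,\dots,\omega_P$ are pairwise distinct and nonzero, $\beta_1,\dots,\beta_P$ are nonzero, $\kappa_1,\dots,\kappa_P$ are pairwise distinct and nonzero, and $1-\kappa_i\omega_j\neq 0$ for all $i,j$. Then for $i=1,\dots,P$ and $q=1,\dots,P-1$, $$\frac{\partial\omega_i}{\partial\beta_q}=\sum_{j=1}^{P}\frac{1-\kappa_j\omega_i}{\beta_i\kappa_j}\prod_{\substack{k=1\\k\neq j}}^{P}\frac{1-\kappa_k\omega_i}{\kappa_k-\kappa_j}\prod_{\substack{l=1\\l\neq i}}^{P}\frac{1-\kappa_j\omega_l}{\omega_l-\omega_i}\;\log\left|\frac{1-\kappa_j\omega_q}{1-\kappa_j\o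mega_P}\right|.$$
   Context: This arises in the optimization of a $P$-level Scheduled Relaxation Jacobi (SRJ) scheme: weights $\omega_i$ are applied with relative frequencies $\beta_i$, and $\Gamma(\kappa)$ is the per-iteration amplification factor, with $\kappa$ ranging over $[\kappa_m,\kappa_M]$, $\kappa_M=2$. *)

theory Defs
  imports "HOL-Analysis.Analysis"
begin

(* Index convention: the free parameters beta_1..beta_{P-1} are the coordinates of
   b :: real^'n (so CARD('n) = P-1, P >= 2 arbitrary via the type variable 'n).
   The full index set {1..P} is 'n option: Some k = index k < P, None = index P. *)

definition betaP :: "real^'n \<Rightarrow> 'n option \<Rightarrow> real" where
  "betaP b i = (case i of Some k \<Rightarrow> b $ k | None \<Rightarrow> 1 - (\<Sum>k\<in>UNIV. b $ k))"

definition Gamma :: "('n::finite option \<Rightarrow> real^'n \<Rightarrow> real) \<Rightarrow> real^'n \<Rightarrow> real \<Rightarrow> real" where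
  "Gamma \<omega> b \<kappa> = (\<Prod>i\<in>UNIV. \<bar>1 - \<omega> i b * \<kappa>\<bar> powr betaP b i)"

end

theory Submission
  imports Defs "HOL-Computational_Algebra.Polynomial"
begin

lemma lagrange:
  fixes \<kappa> :: "'a::finite \<Rightarrow> real" and p :: "real poly"
  assumes inj: "inj \<kappa>" and deg: "degree p < CARD('a)"
  shows "poly p z = (\<Sum>j\<in>UNIV. poly p (\<kappa> j) * (\<Prod>k\<in>UNIV-{j}. (z - \<kappa> k) / (\<kappa> j - \<kappa> k)))"
proof -
  define L where "L j = smult (poly p (\<kappa> j) / (\<Prod>k\<in>UNIV-{j}. (\<kappa> j - \<kappa> k))) (\<Prod>k\<in>UNIV-{j}. [:- \<kappa> k, 1:])" for j
  define r where "r = p - (\<Sum>j\<in>UNIV. L j)"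
  have degL: "degree (L j) < CARD('a)" for j
  proof -
    have "degree (L j) \<le> degree (\<Prod>k\<in>UNIV-{j}. [:- \<kappa> k, 1:])" unfolding L_def by simp
    also have "\<dots> \<le> sum (degree \<circ> (\<lambda>k. [:- \<kappa> k, 1:])) (UNIV-{j})"
      by (rule degree_prod_sum_le) simp
    also have "\<dots> = CARD('a) - 1" by (simp add: card_Diff_singleton)
    also have "\<dots> < CARD('a)" by simp
    finally show ?thesis .
  qed
  have degr: "degree r < CARD('a)"
    unfolding r_def
    by (intro degree_diff_less deg degree_sum_less degL) simp
  have polyL: "poly (L j) x = poly p (\<kappa> j) * (\<Prod>k\<in>UNIV-{j}. (x - \<kappa> k) / (\<kappa> j - \<kappa> k))" for j x
    unfolding L_def by (simp add: poly_prod prod_dividef)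
  have root: "poly r (\<kappa> i) = 0" for i
  proof -
    have "(\<Sum>j\<in>UNIV. poly (L j) (\<kappa> i)) = (\<Sum>j\<in>UNIV. if j = i then poly (L i) (\<kappa> i) else 0)"
    proof (rule sum.cong[OF refl])
      fix j assume "j \<in> (UNIV::'a set)"
      show "poly (L j) (\<kappa> i) = (if j = i then poly (L i) (\<kappa> i) else 0)"
      proof (cases "j = i")
        case False
        have "(\<Prod>k\<in>UNIV-{j}. (\<kappa> i - \<kappa> k) / (\<kappa> j - \<kappa> k)) = 0"
          by (rule prod_zero) (use False in \<open>auto intro!: bexI[where x=i]\<close>)
        then show ?thesis using False by (simp add: polyL)
      qed simp
    qed
    also have "\<dots> = poly (L i) (\<kappa> i)" by simp
    also have "\<dots> = poly p (\<kappa> i)"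
    proof -
      have "(\<Prod>k\<in>UNIV-{i}. (\<kappa> i - \<kappa> k) / (\<kappa> i - \<kappa> k)) = 1"
        by (rule prod.neutral) (use inj in \<open>auto simp: inj_def\<close>)
      then show ?thesis by (simp add: polyL)
    qed
    finally show ?thesis unfolding r_def by (simp add: poly_sum)
  qed
  have "r = 0"
  proof (rule ccontr)
    assume "r \<noteq> 0"
    then have "card {x. poly r x = 0} \<le> degree r" by (rule card_poly_roots_bound)
    moreover have "range \<kappa> \<subseteq> {x. poly r x = 0}" using root by auto
    moreover have "finite {x. poly r x = 0}" using \<open>r \<noteq> 0\<close> by (rule poly_roots_finite)
    ultimately have "card (range \<kappa>) \<le> degree r" by (meson card_mono le_trans)
    moreover have "card (range \<kappa>) = CARD('a)" using inj by (simp add: card_image)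
    ultimately show False using degr by simp
  qed
  then have "poly p z = (\<Sum>j\<in>UNIV. poly (L j) z)" unfolding r_def by (simp add: poly_sum)
  then show ?thesis by (simp add: polyL)
qed

lemma cauchy_inv:
  fixes w k \<beta> :: "'a::finite \<Rightarrow> real"
  assumes injw: "inj w" and injk: "inj k" and wnz: "\<And>i. w i \<noteq> 0" and knz: "\<And>i. k i \<noteq> 0"
    and bnz: "\<And>i. \<beta> i \<noteq> 0" and nd: "\<And>i j. 1 - k j * w i \<noteq> 0"
  shows "(\<Sum>j\<in>UNIV. (1 - k j * w i) / (\<beta> i * k j)
        * (\<Prod>k'\<in>UNIV - {j}. (1 - k k' * w i) / (k k' - k j))
        * (\<Prod>l\<in>UNIV - {i}. (1 - k j * w l) / (w l - w i))
        * (\<beta> m * k j / (1 - k j * w m))) = (if m = i then 1 else 0)"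
proof -
  define D where "D = (\<Prod>l\<in>UNIV-{i}. (w l - w i))"
  have Dnz: "D \<noteq> 0" unfolding D_def using injw by (auto simp: inj_def)
  define pm where "pm = (\<Prod>l\<in>UNIV-{m}. [:1, - w l:])"
  define c where "c = \<beta> m / (\<beta> i * D)"
  define z where "z = 1 / w i"
  define n where "n = CARD('a)"
  define Lj where "Lj j = (\<Prod>k'\<in>UNIV-{j}. (z - k k') / (k j - k k'))" for j
  have polypm: "poly pm x = (\<Prod>l\<in>UNIV-{m}. (1 - x * w l))" for x
    unfolding pm_def by (simp add: poly_prod)
  have degpm: "degree pm < CARD('a)"
  proof -
    have "degree pm \<le> sum (degree \<circ> (\<lambda>l. [:1, - w l:])) (UNIV-{m})"
      unfolding pm_def by (rule degree_prod_sum_le) simp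
    also have "\<dots> \<le> sum (\<lambda>_. 1) (UNIV-{m})" by (rule sum_mono) simp
    also have "\<dots> = CARD('a) - 1" by (simp add: card_Diff_singleton)
    finally have "degree pm \<le> CARD('a) - 1" .
    moreover have "CARD('a) > 0" by (simp add: card_gt_0_iff)
    ultimately show ?thesis by linarith
  qed
  have step2: "(\<Prod>k'\<in>UNIV-{j}. (1 - k k' * w i) / (k k' - k j)) = (- w i) ^ (n - 1) * Lj j" for j
  proof -
    have "(\<Prod>k'\<in>UNIV-{j}. (1 - k k' * w i) / (k k' - k j)) = (\<Prod>k'\<in>UNIV-{j}. (- w i) * ((z - k k') / (k j - k k')))"
    proof (rule prod.cong[OF refl])
      fix k' assume "k' \<in> UNIV - {j}"
      then have "k k' - k j \<noteq> 0" using injk by (auto simp: inj_def)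
      then show "(1 - k k' * w i) / (k k' - k j) = (- w i) * ((z - k k') / (k j - k k'))"
        unfolding z_def using wnz[of i] by (simp add: field_simps)
    qed
    also have "\<dots> = (- w i) ^ (n - 1) * Lj j"
      by (simp only: prod.distrib prod_constant) (simp add: Lj_def n_def card_Diff_singleton)
    finally show ?thesis .
  qed
  have step1: "(1 - k j * w i) / (\<beta> i * k j)
        * (\<Prod>k'\<in>UNIV - {j}. (1 - k k' * w i) / (k k' - k j))
        * (\<Prod>l\<in>UNIV - {i}. (1 - k j * w l) / (w l - w i))
        * (\<beta> m * k j / (1 - k j * w m)) = c * ((- w i) ^ (n - 1) * (poly pm (k j) * Lj j))" for j
  proof -
    have A: "(\<Prod>l\<in>UNIV - {i}. (1 - k j * w l) / (w l - w i)) = (\<Prod>l\<in>UNIV - {i}. (1 - k j * w l)) / D"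
      unfolding D_def by (simp add: prod_dividef)
    have B: "(1 - k j * w i) * (\<Prod>l\<in>UNIV - {i}. (1 - k j * w l)) = (1 - k j * w m) * poly pm (k j)"
      unfolding polypm
      using prod.remove[of UNIV i "\<lambda>l. 1 - k j * w l"] prod.remove[of UNIV m "\<lambda>l. 1 - k j * w l"]
      by (simp add: mult.commute)
    have "(1 - k j * w i) / (\<beta> i * k j)
        * (\<Prod>k'\<in>UNIV - {j}. (1 - k k' * w i) / (k k' - k j))
        * (\<Prod>l\<in>UNIV - {i}. (1 - k j * w l) / (w l - w i))
        * (\<beta> m * k j / (1 - k j * w m)) =
        \<beta> m / (\<beta> i * D) * ((1 - k j * w i) * (\<Prod>l\<in>UNIV - {i}. (1 - k j * w l))) / (1 - k j * w m)
        * (\<Prod>k'\<in>UNIV - {j}. (1 - k k' * w i) / (k k' - k j))"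
      unfolding A using knz[of j] bnz[of i] Dnz nd[of j m] by (simp add: field_simps)
    also have "\<dots> = c * (poly pm (k j) * ((- w i) ^ (n - 1) * Lj j))"
      unfolding B step2 c_def using nd[of j m] by simp
    finally show ?thesis by (simp add: ac_simps)
  qed
  have "(\<Sum>j\<in>UNIV. (1 - k j * w i) / (\<beta> i * k j)
        * (\<Prod>k'\<in>UNIV - {j}. (1 - k k' * w i) / (k k' - k j))
        * (\<Prod>l\<in>UNIV - {i}. (1 - k j * w l) / (w l - w i))
        * (\<beta> m * k j / (1 - k j * w m))) = c * ((- w i) ^ (n - 1) * (\<Sum>j\<in>UNIV. poly pm (k j) * Lj j))"
    unfolding step1 by (simp add: sum_distrib_left)
  also have "(\<Sum>j\<in>UNIV. poly pm (k j) * Lj j) = poly pm z"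
    unfolding Lj_def by (rule lagrange[symmetric, OF injk degpm])
  also have "(- w i) ^ (n - 1) * poly pm z = (\<Prod>l\<in>UNIV-{m}. (w l - w i))"
  proof -
    have "(- w i) ^ (n - 1) = (\<Prod>l\<in>UNIV-{m}. (- w i))" by (simp add: n_def card_Diff_singleton)
    then have "(- w i) ^ (n - 1) * poly pm z = (\<Prod>l\<in>UNIV-{m}. (- w i) * (1 - z * w l))"
      by (simp only: polypm prod.distrib)
    also have "\<dots> = (\<Prod>l\<in>UNIV-{m}. (w l - w i))"
      by (rule prod.cong[OF refl]) (use wnz[of i] in \<open>simp add: z_def field_simps\<close>)
    finally show ?thesis .
  qed
  also have "c * (\<Prod>l\<in>UNIV-{m}. (w l - w i)) = (if m = i then 1 else 0)"
  proof (cases "m = i")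
    case True
    then show ?thesis unfolding c_def D_def using bnz[of i] Dnz[unfolded D_def] by simp
  next
    case False
    have "(\<Prod>l\<in>UNIV-{m}. (w l - w i)) = 0"
      by (rule prod_zero) (use False in \<open>auto intro!: bexI[where x=i]\<close>)
    then show ?thesis using False by simp
  qed
  finally show ?thesis .
qed

lemma aux_div: "- (x * k + w * c) / d * \<beta> = - ((\<beta> * k / d) * x) - c * (\<beta> * w / d)"
  for x k c w d \<beta> :: real
  by (simp add: field_simps diff_divide_distrib add_divide_distrib)

lemma swap_aux: "(\<Sum>j\<in>J. M j * (\<Sum>m\<in>K. A j m * x m)) = (\<Sum>m\<in>K. (\<Sum>j\<in>J. M j * A j m) * x m)"
  for M :: "'a \<Rightarrow> real"
  by (simp add: sum_distrib_left sum_distrib_right mult.assoc) (rule sum.swap)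

theorem theorem1:
  fixes U :: "(real^'n::finite) set"
    and \<omega> :: "'n option \<Rightarrow> real^'n \<Rightarrow> real"
    and \<kappa> :: "'n option \<Rightarrow> real^'n \<Rightarrow> real"
  assumes U_open: "open U"
    and \<omega>_diff: "\<And>i b. b \<in> U \<Longrightarrow> \<omega> i differentiable (at b)"
    and \<kappa>_diff: "\<And>j b. b \<in> U \<Longrightarrow> \<kappa> (Some j) differentiable (at b)"
    and \<kappa>_P: "\<And>b. b \<in> U \<Longrightarrow> \<kappa> None b = 2"
    and crit: "\<And>j b. b \<in> U \<Longrightarrow>
        (\<Sum>i\<in>UNIV. betaP b i * \<omega> i b / (1 - \<kappa> (Some j) b * \<omega> i b)) = 0"
    and dGamma: "\<And>i q b. b \<in> U \<Longrightarrow>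
        ((\<lambda>t. Gamma \<omega> (b + t *\<^sub>R axis q 1) (\<kappa> i (b + t *\<^sub>R axis q 1)))
          has_real_derivative 0) (at 0)"
    and \<omega>_inj: "\<And>b. b \<in> U \<Longrightarrow> inj (\<lambda>i. \<omega> i b)"
    and \<omega>_nz: "\<And>i b. b \<in> U \<Longrightarrow> \<omega> i b \<noteq> 0"
    and \<beta>_nz: "\<And>i b. b \<in> U \<Longrightarrow> betaP b i \<noteq> 0"
    and \<kappa>_inj: "\<And>b. b \<in> U \<Longrightarrow> inj (\<lambda>i. \<kappa> i b)"
    and \<kappa>_nz: "\<And>i b. b \<in> U \<Longrightarrow> \<kappa> i b \<noteq> 0"
    and nondeg: "\<And>i j b. b \<in> U \<Longrightarrow> 1 - \<kappa> i b * \<omega> j b \<noteq> 0"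
    and b: "b \<in> U"
  shows "((\<lambda>t. \<omega> i (b + t *\<^sub>R axis q 1)) has_real_derivative
     (\<Sum>j\<in>UNIV. (1 - \<kappa> j b * \<omega> i b) / (betaP b i * \<kappa> j b)
        * (\<Prod>k\<in>UNIV - {j}. (1 - \<kappa> k b * \<omega> i b) / (\<kappa> k b - \<kappa> j b))
        * (\<Prod>l\<in>UNIV - {i}. (1 - \<kappa> j b * \<omega> l b) / (\<omega> l b - \<omega> i b))
        * ln \<bar>(1 - \<kappa> j b * \<omega> (Some q) b) / (1 - \<kappa> j b * \<omega> None b)\<bar>)) (at 0)"
proof -
  define e :: "real^'n" where "e = axis q 1"
  define \<gamma> where "\<gamma> t = b + t *\<^sub>R e" for t :: real
  have \<gamma>0: "\<gamma> 0 = b" by (simp add: \<gamma>_def)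
  define S where "S = \<gamma> -` U"
  have Sopen: "open S" unfolding S_def \<gamma>_def
    by (rule continuous_open_vimage[OF U_open]) (intro continuous_intros)
  have S0: "0 \<in> S" unfolding S_def using b \<gamma>0 by simp
  have SU: "\<gamma> t \<in> U" if "t \<in> S" for t using that unfolding S_def by simp
  have dir: "\<exists>d. ((\<lambda>t. g (\<gamma> t)) has_real_derivative d) (at 0)" if "g differentiable (at b)" for g :: "real^'n \<Rightarrow> real"
  proof -
    from that obtain g' where g': "(g has_derivative g') (at b)" by (auto simp: differentiable_def)
    have "(\<gamma> has_derivative (\<lambda>t. t *\<^sub>R e)) (at 0)" unfolding \<gamma>_def by (auto intro!: derivative_eq_intros)
    from diff_chain_at[OF this] g' have "((g \<circ> \<gamma>) has_derivative (g' \<circ> (\<lambda>t. t *\<^sub>R e))) (at 0)" using \<gamma>0 by simp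
    moreover have "g' \<circ> (\<lambda>t. t *\<^sub>R e) = (*) (g' e)"
      using has_derivative_bounded_linear[OF g'] by (auto simp: fun_eq_iff bounded_linear.linear linear_cmul)
    ultimately show ?thesis by (auto simp: has_field_derivative_def o_def)
  qed
  have "\<forall>i. \<exists>d. ((\<lambda>t. \<omega> i (\<gamma> t)) has_real_derivative d) (at 0)" using dir \<omega>_diff[OF b] by blast
  then obtain xd where xd: "\<And>i. ((\<lambda>t. \<omega> i (\<gamma> t)) has_real_derivative xd i) (at 0)" by metis
  have kN: "((\<lambda>t. \<kappa> None (\<gamma> t)) has_real_derivative 0) (at 0)"
    by (rule has_field_derivative_transform_within_open[OF DERIV_const[of 2] Sopen S0]) (metis \<kappa>_P SU)
  have "\<forall>j. \<exists>d. ((\<lambda>t. \<kappa> j (\<gamma> t)) has_real_derivative d) (at 0)"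
  proof
    fix j show "\<exists>d. ((\<lambda>t. \<kappa> j (\<gamma> t)) has_real_derivative d) (at 0)"
    proof (cases j)
      case None then show ?thesis using kN by blast
    next
      case (Some j') show ?thesis using dir \<kappa>_diff[OF b] Some by blast
    qed
  qed
  then obtain kd where kd: "\<And>j. ((\<lambda>t. \<kappa> j (\<gamma> t)) has_real_derivative kd j) (at 0)" by metis
  have kdN: "kd None = 0" using DERIV_unique[OF kd kN] .
  define bd where "bd i = (case i of Some k \<Rightarrow> e $ k | None \<Rightarrow> - (\<Sum>k\<in>UNIV. e $ k))" for i
  have ek: "e $ k = (if k = q then 1 else 0)" for k unfolding e_def axis_def by simp
  have esum: "(\<Sum>k\<in>UNIV. e $ k) = 1" by (simp add: ek)
  have bdd: "((\<lambda>t. betaP (\<gamma> t) i) has_real_derivative bd i) (at 0)" for i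
  proof (cases i)
    case None
    have "((\<lambda>t. 1 - (\<Sum>k\<in>UNIV. b $ k + t * e $ k)) has_real_derivative 0 - (\<Sum>k\<in>UNIV. 0 + 1 * e $ k)) (at 0)"
      by (intro DERIV_diff DERIV_const DERIV_sum DERIV_add DERIV_cmult_right DERIV_ident)
    then show ?thesis using None unfolding betaP_def bd_def \<gamma>_def by simp
  next
    case (Some k)
    have "((\<lambda>t. b $ k + t * e $ k) has_real_derivative 0 + 1 * e $ k) (at 0)"
      by (intro DERIV_add DERIV_const DERIV_cmult_right DERIV_ident)
    then show ?thesis using Some unfolding betaP_def bd_def \<gamma>_def by simp
  qed
  have key: "(\<Sum>m\<in>UNIV. (betaP b m * \<kappa> j b / (1 - \<kappa> j b * \<omega> m b)) * xd m)
     = ln \<bar>(1 - \<kappa> j b * \<omega> (Some q) b) / (1 - \<kappa> j b * \<omega> None b)\<bar>" for j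
  proof -
    define u where "u i t = 1 - \<omega> i (\<gamma> t) * \<kappa> j (\<gamma> t)" for i t
    have unz: "u i t \<noteq> 0" if "t \<in> S" for i t
      using nondeg[OF SU[OF that], of j i] unfolding u_def by (simp add: mult.commute)
    have u0: "u i 0 = 1 - \<kappa> j b * \<omega> i b" for i unfolding u_def \<gamma>0 by (simp add: mult.commute)
    define H where "H t = (\<Sum>i\<in>UNIV. betaP (\<gamma> t) i * (ln ((u i t)^2) / 2))" for t
    have lnsq: "ln ((u i t)^2) / 2 = ln \<bar>u i t\<bar>" for i t
    proof -
      have "(u i t)^2 = \<bar>u i t\<bar>^2" by simp
      then show ?thesis by (simp only: ln_realpow)
    qed
    have GH: "exp (H t) = Gamma \<omega> (\<gamma> t) (\<kappa> j (\<gamma> t))" if "t \<in> S" for t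
    proof -
      have "exp (H t) = (\<Prod>i\<in>UNIV. exp (betaP (\<gamma> t) i * (ln ((u i t)^2) / 2)))"
        unfolding H_def by (simp add: exp_sum)
      also have "\<dots> = Gamma \<omega> (\<gamma> t) (\<kappa> j (\<gamma> t))" unfolding Gamma_def
      proof (rule prod.cong[OF refl])
        fix i
        show "exp (betaP (\<gamma> t) i * (ln ((u i t)^2) / 2)) = \<bar>1 - \<omega> i (\<gamma> t) * \<kappa> j (\<gamma> t)\<bar> powr betaP (\<gamma> t) i"
          using unz[OF that, of i] unfolding lnsq by (simp add: powr_def u_def mult.commute)
      qed
      finally show ?thesis .
    qed
    define ud where "ud i = - (xd i * \<kappa> j b + \<omega> i b * kd j)" for i
    have du: "((u i) has_real_derivative ud i) (at 0)" for i
    proof -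
      have "((\<lambda>t. 1 - \<omega> i (\<gamma> t) * \<kappa> j (\<gamma> t)) has_real_derivative 0 - (xd i * \<kappa> j (\<gamma> 0) + kd j * \<omega> i (\<gamma> 0))) (at 0)"
        by (intro DERIV_diff DERIV_const DERIV_mult xd kd)
      then show ?thesis unfolding u_def[abs_def] ud_def \<gamma>0 by (simp add: mult.commute)
    qed
    have dl: "((\<lambda>t. ln ((u i t)^2) / 2) has_real_derivative ud i / u i 0) (at 0)" for i
    proof -
      have p: "0 < (u i 0)^2" using unz[OF S0] by simp
      have "((\<lambda>t. ln ((u i t)^2) / 2) has_real_derivative (1 / (u i 0)^2 * (of_nat 2 * (ud i * (u i 0)^(2 - Suc 0)))) / 2) (at 0)"
        by (intro DERIV_cdivide DERIV_chain2[where g="\<lambda>t. (u i t)^2", OF DERIV_ln_divide[OF p]] DERIV_power du)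
      moreover have "(1 / (u i 0)^2 * (of_nat 2 * (ud i * (u i 0)^(2 - Suc 0)))) / 2 = ud i / u i 0"
        using unz[OF S0, of i] by (simp add: power2_eq_square field_simps)
      ultimately show ?thesis by simp
    qed
    define Hd where "Hd = (\<Sum>i\<in>UNIV. bd i * (ln ((u i 0)^2) / 2) + ud i / u i 0 * betaP (\<gamma> 0) i)"
    have dH: "(H has_real_derivative Hd) (at 0)"
      unfolding H_def[abs_def] Hd_def by (intro DERIV_sum DERIV_mult bdd dl)
    have dG1: "((\<lambda>t. Gamma \<omega> (\<gamma> t) (\<kappa> j (\<gamma> t))) has_real_derivative exp (H 0) * Hd) (at 0)"
      by (rule has_field_derivative_transform_within_open[OF DERIV_chain2[OF DERIV_exp dH] Sopen S0]) (rule GH)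
    have dG0: "((\<lambda>t. Gamma \<omega> (\<gamma> t) (\<kappa> j (\<gamma> t))) has_real_derivative 0) (at 0)"
      using dGamma[where i=j and q=q, OF b] unfolding \<gamma>_def e_def .
    have "exp (H 0) * Hd = 0" using DERIV_unique[OF dG1 dG0] .
    then have Hd0: "Hd = 0" by simp
    have kterm: "kd j * (\<Sum>i\<in>UNIV. betaP b i * \<omega> i b / (1 - \<kappa> j b * \<omega> i b)) = 0"
    proof (cases j)
      case None then show ?thesis using kdN by simp
    next
      case (Some j') then show ?thesis using crit[OF b, of j'] by simp
    qed
    have first: "(\<Sum>i\<in>UNIV. bd i * (ln ((u i 0)^2) / 2)) = ln \<bar>u (Some q) 0\<bar> - ln \<bar>u None 0\<bar>"
    proof -
      have "(\<Sum>i\<in>UNIV. bd i * (ln ((u i 0)^2) / 2)) = (\<Sum>i\<in>insert None (range Some). bd i * ln \<bar>u i 0\<bar>)"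
        unfolding lnsq UNIV_option_conv[symmetric] ..
      also have "\<dots> = bd None * ln \<bar>u None 0\<bar> + (\<Sum>i\<in>range Some. bd i * ln \<bar>u i 0\<bar>)"
        by (subst sum.insert) auto
      also have "(\<Sum>i\<in>range Some. bd i * ln \<bar>u i 0\<bar>) = (\<Sum>k\<in>UNIV. e $ k * ln \<bar>u (Some k) 0\<bar>)"
        by (subst sum.reindex) (auto simp: bd_def)
      also have "\<dots> = (\<Sum>k\<in>UNIV. if k = q then ln \<bar>u (Some k) 0\<bar> else 0)"
        by (rule sum.cong) (auto simp: ek)
      also have "\<dots> = ln \<bar>u (Some q) 0\<bar>" by simp
      finally show ?thesis by (simp add: bd_def esum)
    qed
    have second: "(\<Sum>i\<in>UNIV. ud i / u i 0 * betaP (\<gamma> 0) i) =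
        - (\<Sum>m\<in>UNIV. (betaP b m * \<kappa> j b / (1 - \<kappa> j b * \<omega> m b)) * xd m)
        - kd j * (\<Sum>i\<in>UNIV. betaP b i * \<omega> i b / (1 - \<kappa> j b * \<omega> i b))"
    proof -
      have "ud i / u i 0 * betaP (\<gamma> 0) i = - ((betaP b i * \<kappa> j b / (1 - \<kappa> j b * \<omega> i b)) * xd i)
          - kd j * (betaP b i * \<omega> i b / (1 - \<kappa> j b * \<omega> i b))" for i
        unfolding \<gamma>0 u0 ud_def by (rule aux_div)
      then show ?thesis by (simp add: sum_distrib_left sum_negf sum_subtractf)
    qed
    have "(\<Sum>m\<in>UNIV. (betaP b m * \<kappa> j b / (1 - \<kappa> j b * \<omega> m b)) * xd m) = ln \<bar>u (Some q) 0\<bar> - ln \<bar>u None 0\<bar>"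
      using Hd0 unfolding Hd_def sum.distrib first second kterm by simp
    also have "\<dots> = ln \<bar>(1 - \<kappa> j b * \<omega> (Some q) b) / (1 - \<kappa> j b * \<omega> None b)\<bar>"
      using unz[OF S0, of "Some q"] unz[OF S0, of None] unfolding u0
      by (simp add: abs_divide ln_div)
    finally show ?thesis .
  qed
  have inv: "(\<Sum>j\<in>UNIV. (1 - \<kappa> j b * \<omega> i b) / (betaP b i * \<kappa> j b)
        * (\<Prod>k\<in>UNIV - {j}. (1 - \<kappa> k b * \<omega> i b) / (\<kappa> k b - \<kappa> j b))
        * (\<Prod>l\<in>UNIV - {i}. (1 - \<kappa> j b * \<omega> l b) / (\<omega> l b - \<omega> i b))
        * (betaP b m * \<kappa> j b / (1 - \<kappa> j b * \<omega> m b))) = (if m = i then 1 else 0)" for m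
    by (rule cauchy_inv[where w="\<lambda>l. \<omega> l b" and k="\<lambda>j. \<kappa> j b" and \<beta>="\<lambda>l. betaP b l"])
      (use \<omega>_inj[OF b] \<kappa>_inj[OF b] \<omega>_nz[OF b] \<kappa>_nz[OF b] \<beta>_nz[OF b] nondeg[OF b] in auto)
  have main: "(\<Sum>j\<in>UNIV. (1 - \<kappa> j b * \<omega> i b) / (betaP b i * \<kappa> j b)
        * (\<Prod>k\<in>UNIV - {j}. (1 - \<kappa> k b * \<omega> i b) / (\<kappa> k b - \<kappa> j b))
        * (\<Prod>l\<in>UNIV - {i}. (1 - \<kappa> j b * \<omega> l b) / (\<omega> l b - \<omega> i b))
        * ln \<bar>(1 - \<kappa> j b * \<omega> (Some q) b) / (1 - \<kappa> j b * \<omega> None b)\<bar>) = xd i"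
  proof -
    have "(\<Sum>j\<in>UNIV. (1 - \<kappa> j b * \<omega> i b) / (betaP b i * \<kappa> j b)
        * (\<Prod>k\<in>UNIV - {j}. (1 - \<kappa> k b * \<omega> i b) / (\<kappa> k b - \<kappa> j b))
        * (\<Prod>l\<in>UNIV - {i}. (1 - \<kappa> j b * \<omega> l b) / (\<omega> l b - \<omega> i b))
        * ln \<bar>(1 - \<kappa> j b * \<omega> (Some q) b) / (1 - \<kappa> j b * \<omega> None b)\<bar>)
      = (\<Sum>m\<in>UNIV. (\<Sum>j\<in>UNIV. (1 - \<kappa> j b * \<omega> i b) / (betaP b i * \<kappa> j b)
        * (\<Prod>k\<in>UNIV - {j}. (1 - \<kappa> k b * \<omega> i b) / (\<kappa> k b - \<kappa> j b))
        * (\<Prod>l\<in>UNIV - {i}. (1 - \<kappa> j b * \<omega> l b) / (\<omega> l b - \<omega> i b))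
        * (betaP b m * \<kappa> j b / (1 - \<kappa> j b * \<omega> m b))) * xd m)"
      unfolding key[symmetric] by (rule swap_aux)
    also have "\<dots> = (\<Sum>m\<in>UNIV. (if m = i then 1 else 0) * xd m)" unfolding inv ..
    also have "\<dots> = (\<Sum>m\<in>UNIV. if m = i then xd m else 0)" by (rule sum.cong) auto
    also have "\<dots> = xd i" by simp
    finally show ?thesis .
  qed
  have "((\<lambda>t. \<omega> i (b + t *\<^sub>R axis q 1)) has_real_derivative xd i) (at 0)"
    using xd[of i] unfolding \<gamma>_def e_def .
  then show ?thesis unfolding main .
qed

end
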